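(* Let $G$ be a tree on vertex set $[n]$, and let $\mathcal{G}$ be a DAG with skeleton $G$. Let $i$ be an internal (non-leaf) vertex of $G$ and let $T$ be a subtree of $G$. Let $\mathcal{G}'$ be the DAG on vertex set $[n+1]$ obtained from $\mathcal{G}$ by adding the vertex $n+1$ and the edge $i\to n+1$. Let $\mathcal{H}$ and $\mathcal{H}'$ be the directed graphs identical to $\mathcal{G}$ and $\mathcal{G}'$ respectively, except that the direction of every edge of $T$ is reversed. If $\{\mathcal{G},\mathcal{H}\}$ is an essential flip, then $\{\mathcal{G}',\mathcal{H}'\}$ is an essential flip.
   Context: DAG means directed acyclic graph; its skeleton is the undirected graph with the same adjacencies. A v-structure in a DAG is an induced subgraph $a\to b\leftarrow c$ with $a,c$ non-adjacent. Two DAGs are Markov equivalent iff they have the same skeleton and the same v-structures. An edge $a\to b$ of a DAG $\mathcal{D}$ is essential if $a\to b$ appears in every DAG Markov equivalent to $\mathcal{D}$; $a$ is then an essential parent of $b$. The essential graph of $\mathcal{D}$ is the partially directed graph on the skeleton of $\mathcal{D}$ in which essential edges are directed as in $\mathcal{D}$ and all other edges are undirected. The characteristic imset $c_\mathcal{D}$ of a DAG on $[n]$ is the 0/1-vector indexed by $S\subseteq[n]$, $|S|\ge 2$, with $c_\mathcal{D}(S)=1$ iff some $j\in S$ satisfies $S\subseteq \mathrm{pa}_\mathcal{D}(j)\cup\{j\}$. For DAGs $\mathcal{G},\mathcal{H}$ with common skeleton a tree $G$, let $N_j=\{S\cup\{j\}: S\subseteq \mathrm{ne}_G(j),\ |S|\ge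 2\}$ and $\Delta(\mathcal{G},\mathcal{H})=\{j: c_\mathcal{G}|_{N_j}\neq c_\mathcal{H}|_{N_j}\}$ (equivalently, the vertices at which one DAG has a v-structure the other does not). For a set $S$ of vertices of a tree, $\operatorname{span}(S)$ denotes the vertex set of the smallest subtree containing $S$. Two non-Markov-equivalent DAGs (or their essential graphs) $\mathcal{G},\mathcal{H}$ with common tree skeleton $G$ form an essential flip if, writing $\Delta=\Delta(\mathcal{G},\mathcal{H})$, the essential graphs of $\mathcal{G}$ and of $\mathcal{H}$ restricted to $\operatorname{span}(\Delta)$ contain no undirected edges, and every edge of $G|_{\operatorname{span}(\Delta)}$ is directed differently in the essential graphs of $\mathcal{G}$ and $\mathcal{H}$. *)

theory Defs
  imports Main
begin

text \<open>A directed graph is an edge relation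
  D :: (nat \<times> nat) set; (a,b) \<in> D means a \<rightarrow> b. An undirected graph is a
  symmetric irreflexive relation E.\<close>

definition dag :: "nat set \<Rightarrow> (nat \<times> nat) set \<Rightarrow> bool" where
  "dag V D \<longleftrightarrow> D \<subseteq> V \<times> V \<and> acyclic D"

definition skel :: "(nat \<times> nat) set \<Rightarrow> (nat \<times> nat) set" where
  "skel D = D \<union> D\<inverse>"

definition connected_on :: "nat set \<Rightarrow> (nat \<times> nat) set \<Rightarrow> bool" where
  "connected_on W E \<longleftrightarrow> (\<forall>u\<in>W. \<forall>v\<in>W. (u, v) \<in> (E \<inter> W \<times> W)\<^sup>*)"

text \<open>A tree: finite nonempty vertex set, symmetric irreflexive edge relation,
  connected, with exactly |V|-1 undirected edges.\<close>
definition is_tree :: "nat set \<Rightarrow> (nat \<times> nat) set \<Rightarrow> bool" where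
  "is_tree V E \<longleftrightarrow> finite V \<and> V \<noteq> {} \<and> E \<subseteq> V \<times> V \<and> sym E \<and> irrefl E \<and>
     connected_on V E \<and> card E = 2 * (card V - 1)"

definition is_subtree :: "nat set \<Rightarrow> (nat \<times> nat) set \<Rightarrow> nat set \<Rightarrow> bool" where
  "is_subtree V E W \<longleftrightarrow> W \<subseteq> V \<and> is_tree W (E \<inter> W \<times> W)"

definition vstructs :: "(nat \<times> nat) set \<Rightarrow> (nat \<times> nat \<times> nat) set" where
  "vstructs D = {(a, b, c). (a, b) \<in> D \<and> (c, b) \<in> D \<and> a \<noteq> c \<and> (a, c) \<notin> skel D}"

definition markov_equiv :: "(nat \<times> nat) set \<Rightarrow> (nat \<times> nat) set \<Rightarrow> bool" where
  "markov_equiv D D' \<longleftrightarrow> skel D = skel D' \<and> vstructs D = vstructs D'"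

text \<open>Essential edges of a DAG D on V: edges present in every Markov equivalent DAG on V.
  The essential graph has these directed and all other edges of D undirected.\<close>
definition essential :: "nat set \<Rightarrow> (nat \<times> nat) set \<Rightarrow> (nat \<times> nat) set" where
  "essential V D = {(a, b) \<in> D. \<forall>D'. dag V D' \<and> markov_equiv D D' \<longrightarrow> (a, b) \<in> D'}"

definition pa :: "(nat \<times> nat) set \<Rightarrow> nat \<Rightarrow> nat set" where
  "pa D j = {a. (a, j) \<in> D}"

definition ne :: "(nat \<times> nat) set \<Rightarrow> nat \<Rightarrow> nat set" where
  "ne E j = {a. (j, a) \<in> E}"

text \<open>Characteristic imset (value at S, meaningful for |S| \<ge> 2).\<close>
definition cim :: "(nat \<times> nat) set \<Rightarrow> nat set \<Rightarrow> bool" where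
  "cim D S \<longleftrightarrow> (\<exists>j\<in>S. S \<subseteq> pa D j \<union> {j})"

definition Delta :: "nat set \<Rightarrow> (nat \<times> nat) set \<Rightarrow> (nat \<times> nat) set \<Rightarrow> (nat \<times> nat) set \<Rightarrow> nat set" where
  "Delta V E D1 D2 = {j \<in> V. \<exists>S. S \<subseteq> ne E j \<and> card S \<ge> 2 \<and>
      cim D1 (insert j S) \<noteq> cim D2 (insert j S)}"

definition span :: "nat set \<Rightarrow> (nat \<times> nat) set \<Rightarrow> nat set \<Rightarrow> nat set" where
  "span V E S = \<Inter> {W. W \<subseteq> V \<and> S \<subseteq> W \<and> connected_on W E}"

definition essential_flip :: "nat set \<Rightarrow> (nat \<times> nat) set \<Rightarrow> (nat \<times> nat) set \<Rightarrow> (nat \<times> nat) set \<Rightarrow> bool" where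
  "essential_flip V E D1 D2 \<longleftrightarrow>
     is_tree V E \<and> dag V D1 \<and> dag V D2 \<and> skel D1 = E \<and> skel D2 = E \<and> \<not> markov_equiv D1 D2 \<and>
     (let S = span V E (Delta V E D1 D2) in
        (\<forall>a\<in>S. \<forall>b\<in>S. (a, b) \<in> D1 \<longrightarrow> (a, b) \<in> essential V D1) \<and>
        (\<forall>a\<in>S. \<forall>b\<in>S. (a, b) \<in> D2 \<longrightarrow> (a, b) \<in> essential V D2) \<and>
        (\<forall>a\<in>S. \<forall>b\<in>S. (a, b) \<in> E \<longrightarrow>
            ((a, b) \<in> essential V D1 \<longleftrightarrow> (a, b) \<notin> essential V D2)))"

definition reverse_on :: "nat set \<Rightarrow> (nat \<times> nat) set \<Rightarrow> (nat \<times> nat) set" where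
  "reverse_on W D = {(a, b) \<in> D. \<not> (a \<in> W \<and> b \<in> W)} \<union> {(b, a) | a b. (a, b) \<in> D \<and> a \<in> W \<and> b \<in> W}"

end

theory Submission
  imports Defs
begin

lemma rev_ext: "m \<notin> W \<Longrightarrow> reverse_on W (D \<union> {(i,m)}) = reverse_on W D \<union> {(i,m)}"
  unfolding reverse_on_def by auto

lemma vs_ext:
  assumes "D \<subseteq> V \<times> V" "m \<notin> V" "i \<in> V"
  shows "vstructs (D \<union> {(i,m)}) = vstructs D"
  using assms unfolding vstructs_def skel_def by auto

lemma skel_ext: "skel (D \<union> {(i,m)}) = skel D \<union> {(i,m),(m,i)}"
  unfolding skel_def by auto

lemma skel_ins: "skel (insert (i,m) D) = skel D \<union> {(i,m),(m,i)}"
  unfolding skel_def by auto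

lemma acyc_ext:
  assumes "D \<subseteq> V \<times> V" "m \<notin> V" "i \<in> V" "acyclic D"
  shows "acyclic (D \<union> {(i,m)})"
proof -
  have "(m,i) \<notin> D\<^sup>*"
  proof
    assume "(m,i) \<in> D\<^sup>*"
    then show False
      using assms by (cases rule: converse_rtranclE) auto
  qed
  then show ?thesis using assms(4) by (simp add: acyclic_insert)
qed

lemma dag_ext:
  assumes "dag V D" "m \<notin> V" "i \<in> V"
  shows "dag (insert m V) (D \<union> {(i,m)})"
  using assms acyc_ext[of D V m i] unfolding dag_def by auto

lemma ess_ext:
  assumes D: "D \<subseteq> V \<times> V" and m: "m \<notin> V" and i: "i \<in> V" and ab: "a \<in> V" "b \<in> V"
  shows "(a,b) \<in> essential (insert m V) (D \<union> {(i,m)}) \<longleftrightarrow> (a,b) \<in> essential V D"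
proof
  assume H: "(a,b) \<in> essential (insert m V) (D \<union> {(i,m)})"
  have abD: "(a,b) \<in> D" using H ab m unfolding essential_def by auto
  have "\<forall>D0. dag V D0 \<and> markov_equiv D D0 \<longrightarrow> (a,b) \<in> D0"
  proof (intro allI impI)
    fix D0 assume h: "dag V D0 \<and> markov_equiv D D0"
    have D0: "D0 \<subseteq> V \<times> V" using h unfolding dag_def by auto
    have "dag (insert m V) (D0 \<union> {(i,m)})" using h dag_ext m i by auto
    moreover have "markov_equiv (D \<union> {(i,m)}) (D0 \<union> {(i,m)})"
      using h vs_ext[OF D m i] vs_ext[OF D0 m i] unfolding markov_equiv_def
      by (simp add: skel_ins)
    ultimately have "(a,b) \<in> D0 \<union> {(i,m)}" using H unfolding essential_def by auto
    then show "(a,b) \<in> D0" using ab m by auto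
  qed
  then show "(a,b) \<in> essential V D" using abD unfolding essential_def by auto
next
  assume H: "(a,b) \<in> essential V D"
  have abD: "(a,b) \<in> D" using H unfolding essential_def by auto
  have "\<forall>D2. dag (insert m V) D2 \<and> markov_equiv (D \<union> {(i,m)}) D2 \<longrightarrow> (a,b) \<in> D2"
  proof (intro allI impI)
    fix D2 assume h: "dag (insert m V) D2 \<and> markov_equiv (D \<union> {(i,m)}) D2"
    define D0 where "D0 = D2 \<inter> V \<times> V"
    have "dag V D0" using h unfolding dag_def D0_def by (auto intro: acyclic_subset)
    moreover have "skel D0 = skel D"
    proof -
      have "skel D2 = skel D \<union> {(i,m),(m,i)}" using h unfolding markov_equiv_def
        by (simp add: skel_ins)
      then have "skel D2 \<inter> V \<times> V = skel D" using D m unfolding skel_def by auto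
      moreover have "skel D0 = skel D2 \<inter> V \<times> V" unfolding D0_def skel_def by auto
      ultimately show ?thesis by simp
    qed
    moreover have "vstructs D0 = vstructs D"
    proof -
      have e: "vstructs D2 = vstructs D" using h vs_ext[OF D m i] unfolding markov_equiv_def by simp
      have sub: "vstructs D \<subseteq> V \<times> V \<times> V" using D unfolding vstructs_def by auto
      have "vstructs D0 = vstructs D2"
      proof
        show "vstructs D0 \<subseteq> vstructs D2"
          unfolding vstructs_def D0_def skel_def by auto
        show "vstructs D2 \<subseteq> vstructs D0"
        proof
          fix x assume x: "x \<in> vstructs D2"
          then have "x \<in> V \<times> V \<times> V" using e sub by auto
          then show "x \<in> vstructs D0" using x unfolding vstructs_def D0_def skel_def by auto
        qed
      qed
      then show ?thesis using e by simp
    qed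
    ultimately have "(a,b) \<in> D0" using H unfolding essential_def markov_equiv_def by auto
    then show "(a,b) \<in> D2" unfolding D0_def by auto
  qed
  then show "(a,b) \<in> essential (insert m V) (D \<union> {(i,m)})" using abD unfolding essential_def by auto
qed


lemma cim_ext:
  assumes "m \<notin> X" "D \<subseteq> V \<times> V" "m \<notin> V"
  shows "cim (D \<union> {(i,m)}) X = cim D X"
proof -
  have "\<And>k. k \<in> X \<Longrightarrow> pa (D \<union> {(i,m)}) k = pa D k" using assms unfolding pa_def by auto
  then show ?thesis unfolding cim_def by auto
qed

lemma cim_new_false:
  assumes D: "D \<subseteq> V \<times> V" and m: "m \<notin> V" and i: "i \<in> V"
    and S: "m \<in> S" "i \<notin> S" "card S \<ge> 2"
  shows "\<not> cim (D \<union> {(i,m)}) (insert i S)"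
proof
  assume "cim (D \<union> {(i,m)}) (insert i S)"
  then obtain k where k: "k \<in> insert i S" "insert i S \<subseteq> pa (D \<union> {(i,m)}) k \<union> {k}"
    unfolding cim_def by auto
  show False
  proof (cases "k = m")
    case True
    have "pa (D \<union> {(i,m)}) m = {i}" using D m unfolding pa_def by auto
    then have "S \<subseteq> {m}" using k True S by auto
    then have "card S \<le> 1" using card_mono[of "{m}" S] card_mono[of "{i}" S] by simp
    then show False using S by simp
  next
    case False
    then have "m \<in> pa (D \<union> {(i,m)}) k" using k S by auto
    then show False using D m i unfolding pa_def by auto
  qed
qed

lemma Delta_ext:
  assumes D1: "D1 \<subseteq> V \<times> V" and D2: "D2 \<subseteq> V \<times> V" and E: "E \<subseteq> V \<times> V" "irrefl E"
    and m: "m \<notin> V" and i: "i \<in> V"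
  shows "Delta (insert m V) (E \<union> {(i,m),(m,i)}) (D1 \<union> {(i,m)}) (D2 \<union> {(i,m)}) \<subseteq> Delta V E D1 D2"
proof
  fix j assume "j \<in> Delta (insert m V) (E \<union> {(i,m),(m,i)}) (D1 \<union> {(i,m)}) (D2 \<union> {(i,m)})"
  then obtain S where j: "j \<in> insert m V" and S: "S \<subseteq> ne (E \<union> {(i,m),(m,i)}) j" "card S \<ge> 2"
    and c: "cim (D1 \<union> {(i,m)}) (insert j S) \<noteq> cim (D2 \<union> {(i,m)}) (insert j S)"
    unfolding Delta_def by auto
  have jm: "j \<noteq> m"
  proof
    assume "j = m"
    then have "S \<subseteq> {i}" using S E m unfolding ne_def by auto
    then have "card S \<le> 1" using card_mono[of "{m}" S] card_mono[of "{i}" S] by simp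
    then show False using S by simp
  qed
  have mS: "m \<notin> S"
  proof
    assume mS: "m \<in> S"
    then have ji: "j = i" using S E m jm unfolding ne_def by auto
    have "i \<notin> S" using S E(2) ji m i unfolding ne_def irrefl_def by auto
    then show False using c ji cim_new_false[OF D1 m i mS] cim_new_false[OF D2 m i mS] S by auto
  qed
  have "S \<subseteq> ne E j" using S mS jm unfolding ne_def by auto
  moreover have "m \<notin> insert j S" using jm mS by auto
  ultimately show "j \<in> Delta V E D1 D2"
    using c j jm S cim_ext[OF _ D1 m] cim_ext[OF _ D2 m] unfolding Delta_def by auto
qed

lemma span_ext:
  assumes E: "E \<subseteq> V \<times> V" and m: "m \<notin> V" and X: "X \<subseteq> Y"
  shows "span (insert m V) (E \<union> {(i,m),(m,i)}) X \<subseteq> span V E Y"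
  unfolding span_def
proof (rule Inter_anti_mono, rule subsetI)
  fix W assume "W \<in> {W. W \<subseteq> V \<and> Y \<subseteq> W \<and> connected_on W E}"
  then have W: "W \<subseteq> V" "Y \<subseteq> W" "connected_on W E" by auto
  have "(E \<union> {(i,m),(m,i)}) \<inter> W \<times> W = E \<inter> W \<times> W" using W m by auto
  then have "connected_on W (E \<union> {(i,m),(m,i)})" using W unfolding connected_on_def by simp
  then show "W \<in> {W. W \<subseteq> insert m V \<and> X \<subseteq> W \<and> connected_on W (E \<union> {(i,m),(m,i)})}"
    using W X by auto
qed

lemma tree_ext:
  assumes T: "is_tree V E" and m: "m \<notin> V" and i: "i \<in> V"
  shows "is_tree (insert m V) (E \<union> {(i,m),(m,i)})"
proof -
  have fin: "finite V" "V \<noteq> {}" and E: "E \<subseteq> V \<times> V" "sym E" "irrefl E"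
    and con: "connected_on V E" and c: "card E = 2 * (card V - 1)"
    using T unfolding is_tree_def by auto
  let ?E = "E \<union> {(i,m),(m,i)}"
  let ?R = "?E \<inter> insert m V \<times> insert m V"
  have sub: "E \<inter> V \<times> V \<subseteq> ?R" by auto
  have inV: "\<And>u v. u \<in> V \<Longrightarrow> v \<in> V \<Longrightarrow> (u,v) \<in> ?R\<^sup>*"
    using con rtrancl_mono[OF sub] unfolding connected_on_def by blast
  have im: "(i,m) \<in> ?R" "(m,i) \<in> ?R" using i by auto
  have "connected_on (insert m V) ?E"
    unfolding connected_on_def
  proof (intro ballI)
    fix u v assume u: "u \<in> insert m V" and v: "v \<in> insert m V"
    have "(u,i) \<in> ?R\<^sup>*" using u inV[OF _ i] im by (auto intro: r_into_rtrancl)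
    moreover have "(i,v) \<in> ?R\<^sup>*" using v inV[OF i] im by (auto intro: r_into_rtrancl)
    ultimately show "(u,v) \<in> ?R\<^sup>*" by (rule rtrancl_trans)
  qed
  moreover have "card ?E = 2 * (card (insert m V) - 1)"
  proof -
    have fE: "finite E" using E(1) fin by (meson finite_SigmaI finite_subset)
    have "(i,m) \<notin> E" "(m,i) \<notin> E" "i \<noteq> m" using E(1) m i by auto
    then have "card ?E = card E + 2" using fE i m by auto
    moreover have "card (insert m V) = card V + 1" using fin m by auto
    moreover have "card V \<ge> 1" using fin by (simp add: Suc_leI card_gt_0_iff)
    ultimately show ?thesis using c by simp
  qed
  moreover have "sym ?E" using E(2) unfolding sym_def by auto
  moreover have "irrefl ?E" using E(3) i m unfolding irrefl_def by auto
  ultimately show ?thesis using fin E(1) i unfolding is_tree_def by auto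
qed


theorem mainTheorem3:
  fixes n i :: nat and E D :: "(nat \<times> nat) set" and W :: "nat set"
  assumes "is_tree {1..n} E"
    and "dag {1..n} D" and "skel D = E"
    and "i \<in> {1..n}" and "card (ne E i) \<ge> 2"
    and "is_subtree {1..n} E W"
    and "essential_flip {1..n} E D (reverse_on W D)"
  shows "essential_flip {1..n+1} (E \<union> {(i, n+1), (n+1, i)})
           (D \<union> {(i, n+1)}) (reverse_on W (D \<union> {(i, n+1)}))"
proof -
  define V where "V = {1..n}"
  define m where "m = n + 1"
  define D2 where "D2 = reverse_on W D"
  have V': "{1..n+1} = insert m V" unfolding V_def m_def by auto
  have m: "m \<notin> V" unfolding V_def m_def by auto
  have i: "i \<in> V" using assms(4) unfolding V_def by simp
  have T: "is_tree V E" using assms(1) unfolding V_def by simp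
  have EV: "E \<subseteq> V \<times> V" "irrefl E" "connected_on V E" using T unfolding is_tree_def by auto
  have mW: "m \<notin> W" using assms(6) m unfolding is_subtree_def V_def by auto
  have R: "reverse_on W (D \<union> {(i, n+1)}) = D2 \<union> {(i,m)}"
    unfolding D2_def m_def using rev_ext mW unfolding m_def by blast
  have F: "essential_flip V E D D2" using assms(7) unfolding V_def D2_def by simp
  have dD: "dag V D" and dD2: "dag V D2" and sD: "skel D = E" and sD2: "skel D2 = E"
    and nme: "\<not> markov_equiv D D2" using F unfolding essential_flip_def by auto
  define S where "S = span V E (Delta V E D D2)"
  have c1: "\<forall>a\<in>S. \<forall>b\<in>S. (a, b) \<in> D \<longrightarrow> (a, b) \<in> essential V D"
    and c2: "\<forall>a\<in>S. \<forall>b\<in>S. (a, b) \<in> D2 \<longrightarrow> (a, b) \<in> essential V D2"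
    and c3: "\<forall>a\<in>S. \<forall>b\<in>S. (a, b) \<in> E \<longrightarrow> ((a, b) \<in> essential V D \<longleftrightarrow> (a, b) \<notin> essential V D2)"
    using F unfolding essential_flip_def S_def Let_def by auto
  have DV: "D \<subseteq> V \<times> V" "D2 \<subseteq> V \<times> V" using dD dD2 unfolding dag_def by auto
  have SV: "S \<subseteq> V"
  proof -
    have "Delta V E D D2 \<subseteq> V" unfolding Delta_def by auto
    then have "V \<in> {W. W \<subseteq> V \<and> Delta V E D D2 \<subseteq> W \<and> connected_on W E}" using EV by auto
    then show ?thesis unfolding S_def span_def by auto
  qed
  define S' where "S' = span (insert m V) (E \<union> {(i,m),(m,i)}) (Delta (insert m V) (E \<union> {(i,m),(m,i)}) (D \<union> {(i,m)}) (D2 \<union> {(i,m)}))"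
  have S'S: "S' \<subseteq> S" unfolding S'_def S_def
    by (rule span_ext[OF EV(1) m Delta_ext[OF DV EV(1,2) m i]])
  have nme': "\<not> markov_equiv (D \<union> {(i,m)}) (D2 \<union> {(i,m)})"
    using nme sD sD2 vs_ext[OF DV(1) m i] vs_ext[OF DV(2) m i] unfolding markov_equiv_def
    by (simp add: skel_ins)
  have main: "essential_flip (insert m V) (E \<union> {(i,m),(m,i)}) (D \<union> {(i,m)}) (D2 \<union> {(i,m)})"
    unfolding essential_flip_def Let_def S'_def[symmetric]
  proof (intro conjI)
    show "is_tree (insert m V) (E \<union> {(i, m), (m, i)})" using tree_ext[OF T m i] .
    show "dag (insert m V) (D \<union> {(i, m)})" using dag_ext[OF dD m i] .
    show "dag (insert m V) (D2 \<union> {(i, m)})" using dag_ext[OF dD2 m i] .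
    show "skel (D \<union> {(i, m)}) = E \<union> {(i, m), (m, i)}" using sD by (simp add: skel_ins)
    show "skel (D2 \<union> {(i, m)}) = E \<union> {(i, m), (m, i)}" using sD2 by (simp add: skel_ins)
    show "\<not> markov_equiv (D \<union> {(i, m)}) (D2 \<union> {(i, m)})" using nme' .
    show "\<forall>a\<in>S'. \<forall>b\<in>S'. (a, b) \<in> D \<union> {(i, m)} \<longrightarrow> (a, b) \<in> essential (insert m V) (D \<union> {(i, m)})"
    proof (intro ballI impI)
      fix a b assume ab: "a \<in> S'" "b \<in> S'" "(a, b) \<in> D \<union> {(i, m)}"
      have abV: "a \<in> V" "b \<in> V" "a \<in> S" "b \<in> S" using ab S'S SV by auto
      then have "(a,b) \<in> D" using ab m by auto
      then show "(a, b) \<in> essential (insert m V) (D \<union> {(i, m)})"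
        using c1 abV ess_ext[OF DV(1) m i abV(1,2)] by auto
    qed
    show "\<forall>a\<in>S'. \<forall>b\<in>S'. (a, b) \<in> D2 \<union> {(i, m)} \<longrightarrow> (a, b) \<in> essential (insert m V) (D2 \<union> {(i, m)})"
    proof (intro ballI impI)
      fix a b assume ab: "a \<in> S'" "b \<in> S'" "(a, b) \<in> D2 \<union> {(i, m)}"
      have abV: "a \<in> V" "b \<in> V" "a \<in> S" "b \<in> S" using ab S'S SV by auto
      then have "(a,b) \<in> D2" using ab m by auto
      then show "(a, b) \<in> essential (insert m V) (D2 \<union> {(i, m)})"
        using c2 abV ess_ext[OF DV(2) m i abV(1,2)] by auto
    qed
    show "\<forall>a\<in>S'. \<forall>b\<in>S'. (a, b) \<in> E \<union> {(i, m), (m, i)} \<longrightarrow>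
        ((a, b) \<in> essential (insert m V) (D \<union> {(i, m)})) = ((a, b) \<notin> essential (insert m V) (D2 \<union> {(i, m)}))"
    proof (intro ballI impI)
      fix a b assume ab: "a \<in> S'" "b \<in> S'" "(a, b) \<in> E \<union> {(i, m), (m, i)}"
      have abV: "a \<in> V" "b \<in> V" "a \<in> S" "b \<in> S" using ab S'S SV by auto
      then have "(a,b) \<in> E" using ab m by auto
      then show "((a, b) \<in> essential (insert m V) (D \<union> {(i, m)})) = ((a, b) \<notin> essential (insert m V) (D2 \<union> {(i, m)}))"
        using c3 abV ess_ext[OF DV(1) m i abV(1,2)] ess_ext[OF DV(2) m i abV(1,2)] by auto
    qed
  qed
  then show ?thesis using V' R unfolding m_def by simp
qed

end
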